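(* Let $f_0$ be a positive integer. There exists a toric line arrangement in $\mathbb{T}^2$ consisting of exactly $3$ lines with $f_0$ vertices and $f_2=f_0$ chambers if and only if $f_0\ge 2$.
   Context: Let $\mathbb{T}^2=\mathbb{R}^2/\mathbb{Z}^2$ with quotient map $\pi:\mathbb{R}^2\to\mathbb{T}^2$. A toric line is the image $\pi(L)$ of a line $L=\{(x,y)\in\mathbb{R}^2: ax+by=c\}$ with $a,b\in\mathbb{Z}$ coprime and $c\in\mathbb{R}$; it is said to be of type $(a,b)$. A toric line arrangement is a finite set $\mathcal{A}=\{l_1,\dots,l_n\}$ of distinct toric lines which is essential, i.e. not all of its lines are of the same type (not all lines are parallel). The vertices of $\mathcal{A}$ are the points of $\mathbb{T}^2$ lying on at least two lines of $\mathcal{A}$; the chambers are the connected components of $\mathbb{T}^2\setminus\bigcup_i l_i$. We write $f_0$ and $f_2$ for the numbers of vertices and chambers. *)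

theory Defs
  imports "HOL-Analysis.Analysis"
begin

text \<open>The torus R^2/Z^2 is realised as its standard homeomorphic image in C x C,
  via the map (x,y) to (cis(2 pi x), cis(2 pi y)), which induces a homeomorphism
  from R^2/Z^2 onto its image.\<close>

definition torus_map :: "real \<times> real \<Rightarrow> complex \<times> complex" where
  "torus_map p = (cis (2 * pi * fst p), cis (2 * pi * snd p))"

definition torus :: "(complex \<times> complex) set" where
  "torus = range torus_map"

definition toric_line :: "int \<Rightarrow> int \<Rightarrow> real \<Rightarrow> (complex \<times> complex) set" where
  "toric_line a b c = torus_map ` {p. of_int a * fst p + of_int b * snd p = c}"

definition is_toric_line :: "(complex \<times> complex) set \<Rightarrow> bool" where
  "is_toric_line L \<longleftrightarrow> (\<exists>a b c. coprime a b \<and> L = toric_line a b c)"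

definition toric_arrangement :: "(complex \<times> complex) set set \<Rightarrow> bool" where
  "toric_arrangement A \<longleftrightarrow> finite A \<and> (\<forall>L\<in>A. is_toric_line L) \<and>
     (\<exists>a1 b1 c1 a2 b2 c2. coprime a1 b1 \<and> coprime a2 b2 \<and>
        toric_line a1 b1 c1 \<in> A \<and> toric_line a2 b2 c2 \<in> A \<and> a1 * b2 \<noteq> a2 * b1)"

definition arr_vertices :: "(complex \<times> complex) set set \<Rightarrow> (complex \<times> complex) set" where
  "arr_vertices A = {p \<in> torus. \<exists>L1\<in>A. \<exists>L2\<in>A. L1 \<noteq> L2 \<and> p \<in> L1 \<and> p \<in> L2}"

definition arr_chambers :: "(complex \<times> complex) set set \<Rightarrow> (complex \<times> complex) set set" where
  "arr_chambers A = components (torus - \<Union>A)"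

end

theory Submission
  imports Defs
begin


definition W :: "int \<Rightarrow> int \<Rightarrow> complex \<times> complex \<Rightarrow> complex" where
  "W a b z = fst z powi a * snd z powi b"

lemma cis_eq_1: "cis t = 1 \<Longrightarrow> \<exists>n::int. t = 2 * pi * n"
proof -
  assume "cis t = 1"
  hence "exp (\<i> * of_real t) = 1" by (simp add: cis_conv_exp)
  then obtain n :: int where "t = of_int (2*n) * pi" by (auto simp: exp_eq_1)
  thus ?thesis by (intro exI[of _ n]) simp
qed

lemma cis_2pi_eq: "cis (2*pi*x) = cis (2*pi*y) \<longleftrightarrow> x - y \<in> \<int>"
proof
  assume "cis (2*pi*x) = cis (2*pi*y)"
  hence "cis (2*pi*(x-y)) = 1" by (simp add: cis_divide[symmetric] right_diff_distrib)
  then obtain n::int where "2*pi*(x-y) = 2*pi*n" using cis_eq_1 by blast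
  hence "x - y = n" by simp
  thus "x - y \<in> \<int>" by simp
next
  assume "x - y \<in> \<int>"
  hence "cis (2*pi*(x-y)) = 1" by simp
  hence "cis (2*pi*x) / cis (2*pi*y) = 1" by (simp add: cis_divide right_diff_distrib)
  thus "cis (2*pi*x) = cis (2*pi*y)" by (simp add: divide_eq_1_iff)
qed

lemma unit_cis: "cmod w = 1 \<Longrightarrow> cis (Arg w) = w"
proof -
  assume h: "cmod w = 1"
  hence "w \<noteq> 0" by auto
  hence "cis (Arg w) = w / of_real (cmod w)" by (simp add: cis_Arg Complex.sgn_eq)
  thus ?thesis using h by simp
qed

lemma torus_eq: "torus = {z. cmod (fst z) = 1 \<and> cmod (snd z) = 1}"
proof safe
  fix z assume "z \<in> torus" thus "cmod (fst z) = 1" "cmod (snd z) = 1"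
    by (auto simp: torus_def torus_map_def)
next
  fix a b assume h: "cmod (fst (a,b)) = 1" "cmod (snd (a,b)) = 1"
  have "torus_map (Arg a/(2*pi), Arg b/(2*pi)) = (a,b)"
    using h by (simp add: torus_map_def unit_cis)
  thus "(a,b) \<in> torus" unfolding torus_def by (metis rangeI)
qed

lemma torus_map_in: "torus_map p \<in> torus" by (simp add: torus_def)

lemma W_tm: "W a b (torus_map p) = cis (2*pi*(of_int a * fst p + of_int b * snd p))"
  by (simp add: W_def torus_map_def cis_power_int cis_mult algebra_simps)

lemma torus_map_eq: "torus_map p = torus_map q \<longleftrightarrow> fst p - fst q \<in> \<int> \<and> snd p - snd q \<in> \<int>"
  by (simp add: torus_map_def cis_2pi_eq)

lemma torus_ex: "z \<in> torus \<Longrightarrow> \<exists>p. z = torus_map p"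
  by (auto simp: torus_def)

lemma line_char:
  assumes "coprime a b"
  shows "toric_line a b c = {z\<in>torus. W a b z = cis (2*pi*c)}"
proof safe
  fix z assume "z \<in> toric_line a b c"
  then obtain p where p: "z = torus_map p" "of_int a * fst p + of_int b * snd p = c"
    by (auto simp: toric_line_def)
  show "z \<in> torus" using p by (simp add: torus_map_in)
  show "W a b z = cis (2*pi*c)" using p by (simp add: W_tm)
next
  fix z assume z: "z \<in> torus" "W a b z = cis (2*pi*c)"
  then obtain q where q: "z = torus_map q" using torus_ex by blast
  have "(of_int a * fst q + of_int b * snd q) - c \<in> \<int>"
    using z q by (simp add: W_tm cis_2pi_eq)
  then obtain k::int where k: "of_int a * fst q + of_int b * snd q - c = k"
    by (metis Ints_cases)
  obtain uu vv :: int where uv: "uu * a + vv * b = 1"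
    using bezout_int[of a b] assms by auto
  define pp :: "real \<times> real" where "pp = (fst q - real_of_int k * real_of_int uu, snd q - real_of_int k * real_of_int vv)"
  have "of_int a * fst pp + of_int b * snd pp = c"
  proof -
    have e: "real_of_int (uu*a + vv*b) = 1" using uv by simp
    have "of_int a * fst pp + of_int b * snd pp = (of_int a * fst q + of_int b * snd q) - of_int k * real_of_int (uu*a + vv*b)"
      unfolding pp_def by (simp add: algebra_simps)
    then show ?thesis using k e by simp
  qed
  moreover have "torus_map pp = torus_map q"
    unfolding torus_map_eq pp_def by simp
  ultimately show "z \<in> toric_line a b c" using q unfolding toric_line_def
    by (intro image_eqI[of _ _ pp]) auto
qed



definition sol :: "int \<Rightarrow> int \<Rightarrow> int \<Rightarrow> int \<Rightarrow> real \<Rightarrow> real \<Rightarrow> real \<times> real" where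
  "sol a1 b1 a2 b2 r1 r2 = ((r1 * b2 - r2 * b1) / (a1*b2 - a2*b1), (a1*r2 - a2*r1) / (a1*b2 - a2*b1))"

lemma div_comb: "(D::real) \<noteq> 0 \<Longrightarrow> A * (X / D) + B * (Y / D) = (A*X + B*Y) / D"
  by (simp add: add_divide_distrib)

lemma sol_ok:
  assumes "a1*b2 - a2*b1 \<noteq> 0"
  shows "of_int a1 * fst (sol a1 b1 a2 b2 r1 r2) + of_int b1 * snd (sol a1 b1 a2 b2 r1 r2) = r1"
    "of_int a2 * fst (sol a1 b1 a2 b2 r1 r2) + of_int b2 * snd (sol a1 b1 a2 b2 r1 r2) = r2"
proof -
  define D where "D = real_of_int (a1*b2 - a2*b1)"
  have d: "D \<noteq> 0" unfolding D_def using assms of_int_eq_0_iff by blast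
  have D: "D = real_of_int a1 * of_int b2 - of_int a2 * of_int b1" by (simp add: D_def)
  have s: "sol a1 b1 a2 b2 r1 r2 = ((r1 * b2 - r2 * b1) / D, (a1*r2 - a2*r1) / D)"
    by (simp add: sol_def D_def)
  have "of_int a1 * ((r1 * b2 - r2 * b1) / D) + of_int b1 * ((a1*r2 - a2*r1) / D)
     = (of_int a1 * (r1 * b2 - r2 * b1) + of_int b1 * (a1*r2 - a2*r1)) / D"
    using div_comb[OF d] by blast
  also have "of_int a1 * (r1 * b2 - r2 * b1) + of_int b1 * (a1*r2 - a2*r1) = r1 * D"
    unfolding D by (simp add: algebra_simps)
  finally show "of_int a1 * fst (sol a1 b1 a2 b2 r1 r2) + of_int b1 * snd (sol a1 b1 a2 b2 r1 r2) = r1"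
    using d s by simp
  have "of_int a2 * ((r1 * b2 - r2 * b1) / D) + of_int b2 * ((a1*r2 - a2*r1) / D)
     = (of_int a2 * (r1 * b2 - r2 * b1) + of_int b2 * (a1*r2 - a2*r1)) / D"
    using div_comb[OF d] by blast
  also have "of_int a2 * (r1 * b2 - r2 * b1) + of_int b2 * (a1*r2 - a2*r1) = r2 * D"
    unfolding D by (simp add: algebra_simps)
  finally show "of_int a2 * fst (sol a1 b1 a2 b2 r1 r2) + of_int b2 * snd (sol a1 b1 a2 b2 r1 r2) = r2"
    using d s by simp
qed

lemma point_exists:
  assumes "a1*b2 - a2*b1 \<noteq> 0"
  shows "\<exists>z\<in>torus. W a1 b1 z = cis (2*pi*r1) \<and> W a2 b2 z = cis (2*pi*r2)"
  apply (rule bexI[of _ "torus_map (sol a1 b1 a2 b2 r1 r2)"])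
  using sol_ok[OF assms, of r1 r2] unfolding W_tm by (simp_all add: torus_map_in)

lemma two_points:
  assumes "coprime a1 b1" "a1*b2 - a2*b1 \<noteq> 0" "\<bar>a1*b2 - a2*b1\<bar> \<noteq> 1"
  shows "\<exists>z\<in>torus. \<exists>z'\<in>torus. z \<noteq> z' \<and> W a1 b1 z = cis (2*pi*r1) \<and> W a2 b2 z = cis (2*pi*r2)
     \<and> W a1 b1 z' = cis (2*pi*r1) \<and> W a2 b2 z' = cis (2*pi*r2)"
proof -
  define d where "d = a1*b2 - a2*b1"
  define p where "p = sol a1 b1 a2 b2 r1 r2"
  define p' where "p' = sol a1 b1 a2 b2 r1 (r2+1)"
  have dr: "real_of_int a1 * of_int b2 - of_int a2 * of_int b1 = of_int d"
    by (simp add: d_def)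
  have d0: "real_of_int d \<noteq> 0" using assms(2) unfolding d_def using of_int_eq_0_iff by blast
  have e1: "fst p - fst p' = of_int b1 / of_int d"
    unfolding p_def p'_def sol_def using d0 dr by (simp add: field_simps)
  have e2: "snd p - snd p' = - of_int a1 / of_int d"
    unfolding p_def p'_def sol_def using d0 dr by (simp add: field_simps)
  have ne: "torus_map p \<noteq> torus_map p'"
  proof
    assume "torus_map p = torus_map p'"
    hence "fst p - fst p' \<in> \<int>" "snd p - snd p' \<in> \<int>" by (auto simp: torus_map_eq)
    then obtain k l :: int where k: "of_int b1 / of_int d = (of_int k::real)"
        and l: "- of_int a1 / of_int d = (of_int l::real)"
      using e1 e2 by (metis Ints_cases)
    have "real_of_int b1 = of_int (k*d)" using k d0 by (simp add: field_simps)
    hence "b1 = k*d" by (simp only: of_int_eq_iff)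
    moreover have "real_of_int a1 = of_int (-l*d)" using l d0 by (simp add: field_simps)
    hence "a1 = -l*d" by (simp only: of_int_eq_iff)
    ultimately have "d dvd a1" "d dvd b1" by auto
    hence "\<bar>d\<bar> = 1" using coprime_common_divisor_int assms(1) by blast
    thus False using assms(3) d_def by simp
  qed
  have c2: "cis (2*pi*(r2+1)) = cis (2*pi*r2)" by (simp add: cis_2pi_eq)
  have w1: "W a1 b1 (torus_map p) = cis (2*pi*r1)" "W a2 b2 (torus_map p) = cis (2*pi*r2)"
    using sol_ok[OF assms(2), of r1 r2] unfolding p_def W_tm by simp_all
  have w2: "W a1 b1 (torus_map p') = cis (2*pi*r1)" "W a2 b2 (torus_map p') = cis (2*pi*(r2+1))"
    using sol_ok[OF assms(2), of r1 "r2+1"] unfolding p'_def W_tm by simp_all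
  show ?thesis
    apply (rule bexI[of _ "torus_map p"])
     apply (rule bexI[of _ "torus_map p'"])
    using w1 w2 c2 ne torus_map_in by auto
qed

lemma pm_lemma:
  fixes a1 b1 a3 b3 :: int
  assumes "coprime a1 b1" "coprime a3 b3" "a1*b3 = a3*b1"
  shows "(a3 = a1 \<and> b3 = b1) \<or> (a3 = -a1 \<and> b3 = -b1)"
proof -
  have c1: "coprime b1 a1" "coprime b3 a3" using assms(1,2) by (simp_all add: coprime_commute)
  have "a1 dvd a3*b1" unfolding assms(3)[symmetric] by (rule dvd_triv_left)
  hence "a1 dvd a3" using coprime_dvd_mult_left_iff[OF assms(1)] by blast
  have "a3 dvd a1*b3" unfolding assms(3) by (rule dvd_triv_left)
  hence "a3 dvd a1" using coprime_dvd_mult_left_iff[OF assms(2)] by blast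
  have "b1 dvd a1*b3" unfolding assms(3) by (rule dvd_triv_right)
  hence "b1 dvd b3" using coprime_dvd_mult_right_iff[OF c1(1)] by blast
  have "b3 dvd a3*b1" unfolding assms(3)[symmetric] by (rule dvd_triv_right)
  hence "b3 dvd b1" using coprime_dvd_mult_right_iff[OF c1(2)] by blast
  have A: "\<bar>a1\<bar> = \<bar>a3\<bar>" by (rule zdvd_antisym_abs[OF \<open>a1 dvd a3\<close> \<open>a3 dvd a1\<close>])
  have B: "\<bar>b1\<bar> = \<bar>b3\<bar>" by (rule zdvd_antisym_abs[OF \<open>b1 dvd b3\<close> \<open>b3 dvd b1\<close>])
  show ?thesis
  proof (cases "a1 = 0")
    case True
    then have "a3 = 0" using A by arith
    have "b3 = b1 \<or> b3 = -b1" using B by arith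
    then show ?thesis using True \<open>a3 = 0\<close> by auto
  next
    case False
    have "a3 = a1 \<or> a3 = -a1" using A by arith
    then show ?thesis
    proof
      assume h: "a3 = a1"
      hence "a1*b3 = a1*b1" using assms(3) by simp
      thus ?thesis using h False by simp
    next
      assume h: "a3 = -a1"
      hence "a1*b3 = a1*(-b1)" using assms(3) by simp
      hence "b3 = -b1" using False by (simp only: mult_cancel_left) simp
      thus ?thesis using h by simp
    qed
  qed
qed



lemma torus_fst: "z \<in> torus \<Longrightarrow> cmod (fst z) = 1" and torus_snd: "z \<in> torus \<Longrightarrow> cmod (snd z) = 1"
  by (auto simp: torus_eq)

lemma W_unit: "z \<in> torus \<Longrightarrow> cmod (W a b z) = 1"
  by (simp add: W_def norm_mult norm_power_int torus_fst torus_snd)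

lemma W_neg: "z \<in> torus \<Longrightarrow> W (-a) (-b) z = inverse (W a b z)"
  by (simp add: W_def power_int_minus)

lemma W_lin:
  assumes "z \<in> torus"
  shows "W (m*a1+n*a2) (m*b1+n*b2) z = W a1 b1 z powi m * W a2 b2 z powi n"
proof -
  have nz: "fst z \<noteq> 0" "snd z \<noteq> 0" using torus_fst[OF assms] torus_snd[OF assms] by auto
  have "W (m*a1+n*a2) (m*b1+n*b2) z = (fst z powi (m*a1) * fst z powi (n*a2)) * (snd z powi (m*b1) * snd z powi (n*b2))"
    unfolding W_def using nz by (simp add: power_int_add)
  also have "\<dots> = (fst z powi a1 * snd z powi b1) powi m * (fst z powi a2 * snd z powi b2) powi n"
    by (simp add: power_int_mult_distrib power_int_mult mult.commute mult.left_commute)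
  finally show ?thesis by (simp add: W_def)
qed

lemma W_cont: "continuous_on torus (W a b)"
proof -
  have "continuous_on torus (\<lambda>z. fst z powi a)"
    by (rule continuous_on_power_int) (auto intro: continuous_intros dest: torus_fst)
  moreover have "continuous_on torus (\<lambda>z. snd z powi b)"
    by (rule continuous_on_power_int) (auto intro: continuous_intros dest: torus_snd)
  ultimately show ?thesis unfolding W_def by (rule continuous_on_mult)
qed

lemma unit_real: "cmod w = 1 \<Longrightarrow> Im w = 0 \<Longrightarrow> w = 1 \<or> w = -1"
proof -
  assume h: "cmod w = 1" "Im w = 0"
  hence "\<bar>Re w\<bar> = 1" by (simp add: cmod_eq_Re)
  hence "Re w = 1 \<or> Re w = -1" by arith
  thus ?thesis using h(2) by (auto simp: complex_eq_iff)
qed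

lemma ang_props:
  assumes "cmod w = 1" "w \<noteq> 1"
  shows "-w \<notin> \<real>\<^sub>\<le>\<^sub>0" "-pi < Arg (-w)" "Arg (-w) < pi" "w = - cis (Arg (-w))"
proof -
  show nr: "-w \<notin> \<real>\<^sub>\<le>\<^sub>0"
  proof
    assume "-w \<in> \<real>\<^sub>\<le>\<^sub>0"
    hence "Re (-w) \<le> 0" "Im w = 0" by (auto simp: complex_nonpos_Reals_iff)
    thus False using unit_real[OF assms(1)] assms(2) by auto
  qed
  show "-pi < Arg (-w)" by (rule mpi_less_Arg)
  have "Arg (-w) \<noteq> pi"
  proof
    assume "Arg (-w) = pi"
    hence "Re (-w) < 0" "Im (-w) = 0" by (auto simp: Arg_eq_pi)
    thus False using nr by (auto simp: complex_nonpos_Reals_iff)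
  qed
  thus "Arg (-w) < pi" using Arg_le_pi[of "-w"] by simp
  have "cis (Arg (-w)) = -w" by (rule unit_cis) (simp add: assms(1))
  thus "w = - cis (Arg (-w))" by simp
qed

lemma cont_Arg_comp:
  assumes "continuous_on S f" "\<And>x. x \<in> S \<Longrightarrow> f x \<notin> \<real>\<^sub>\<le>\<^sub>0"
  shows "continuous_on S (\<lambda>x. Arg (f x))"
proof -
  have "continuous_on (f ` S) Arg"
    by (rule continuous_at_imp_continuous_on) (use assms(2) continuous_at_Arg in blast)
  from continuous_on_compose[OF assms(1) this] show ?thesis by (simp add: o_def)
qed



lemma disconn:
  assumes cp: "coprime a1 b1" "coprime a2 b2" "coprime a3 b3"
    and d: "\<bar>a1*b2 - a2*b1\<bar> = 1" "\<bar>a1*b3 - a3*b1\<bar> = 1" "\<bar>a2*b3 - a3*b2\<bar> = 1"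
    and v: "v \<in> toric_line a1 b1 c1" "v \<in> toric_line a2 b2 c2" "v \<in> toric_line a3 b3 c3"
  shows "\<not> connected (torus - (toric_line a1 b1 c1 \<union> toric_line a2 b2 c2 \<union> toric_line a3 b3 c3))"
proof
  define S where "S = torus - (toric_line a1 b1 c1 \<union> toric_line a2 b2 c2 \<union> toric_line a3 b3 c3)"
  assume "connected (torus - (toric_line a1 b1 c1 \<union> toric_line a2 b2 c2 \<union> toric_line a3 b3 c3))"
  hence conn: "connected S" unfolding S_def .
  define D where "D = a1*b2 - a2*b1"
  define m where "m = -(a2*b3 - a3*b2)*D"
  define n where "n = (a1*b3 - a3*b1)*D"
  have D1: "D = 1 \<or> D = -1" using d(1) unfolding D_def by arith
  have DD: "D*D = 1" using D1 by auto
  have "a2*b3 - a3*b2 = 1 \<or> a2*b3 - a3*b2 = -1" using d(3) by arith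
  hence m1: "m = 1 \<or> m = -1" using D1 unfolding m_def by auto
  have "a1*b3 - a3*b1 = 1 \<or> a1*b3 - a3*b1 = -1" using d(2) by arith
  hence n1: "n = 1 \<or> n = -1" using D1 unfolding n_def by auto
  have "m*a1 + n*a2 = (D*D)*a3" unfolding m_def n_def D_def by algebra
  hence a3e: "a3 = m*a1 + n*a2" using DD by simp
  have "m*b1 + n*b2 = (D*D)*b3" unfolding m_def n_def D_def by algebra
  hence b3e: "b3 = m*b1 + n*b2" using DD by simp
  have om: "odd m" "odd n" using m1 n1 by auto
  have mm: "real_of_int m * real_of_int m = 1" "real_of_int n * real_of_int n = 1" using m1 n1 by auto
  define \<alpha>1 where "\<alpha>1 = cis (2*pi*c1)"
  define \<alpha>2 where "\<alpha>2 = cis (2*pi*c2)"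
  define \<alpha>3 where "\<alpha>3 = cis (2*pi*c3)"
  have L1: "toric_line a1 b1 c1 = {z\<in>torus. W a1 b1 z = \<alpha>1}" using line_char[OF cp(1)] \<alpha>1_def by simp
  have L2: "toric_line a2 b2 c2 = {z\<in>torus. W a2 b2 z = \<alpha>2}" using line_char[OF cp(2)] \<alpha>2_def by simp
  have L3: "toric_line a3 b3 c3 = {z\<in>torus. W a3 b3 z = \<alpha>3}" using line_char[OF cp(3)] \<alpha>3_def by simp
  have vt: "v \<in> torus" and Wv: "W a1 b1 v = \<alpha>1" "W a2 b2 v = \<alpha>2" "W a3 b3 v = \<alpha>3"
    using v L1 L2 L3 by auto
  have W3: "W a3 b3 z = W a1 b1 z powi m * W a2 b2 z powi n" if "z \<in> torus" for z
    using W_lin[OF that, of m a1 n a2 b1 b2] a3e b3e by simp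
  have a3v: "\<alpha>3 = \<alpha>1 powi m * \<alpha>2 powi n" using W3[OF vt] Wv by simp
  have anz: "\<alpha>1 \<noteq> 0" "\<alpha>2 \<noteq> 0" "\<alpha>3 \<noteq> 0" by (simp_all add: \<alpha>1_def \<alpha>2_def \<alpha>3_def)
  have an: "cmod \<alpha>1 = 1" "cmod \<alpha>2 = 1" "cmod \<alpha>3 = 1" by (simp_all add: \<alpha>1_def \<alpha>2_def \<alpha>3_def)
  define \<beta>1 where "\<beta>1 = (\<lambda>z. W a1 b1 z / \<alpha>1)"
  define \<beta>2 where "\<beta>2 = (\<lambda>z. W a2 b2 z / \<alpha>2)"
  define \<beta>3 where "\<beta>3 = (\<lambda>z. W a3 b3 z / \<alpha>3)"
  have b3f: "\<beta>3 z = \<beta>1 z powi m * \<beta>2 z powi n" if "z \<in> torus" for z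
    unfolding \<beta>1_def \<beta>2_def \<beta>3_def W3[OF that] a3v power_int_divide_distrib by simp
  have bu: "cmod (\<beta>1 z) = 1" "cmod (\<beta>2 z) = 1" if "z \<in> torus" for z
    unfolding \<beta>1_def \<beta>2_def using W_unit[OF that] an by (simp_all add: norm_divide)
  define g where "g = (\<lambda>z. of_int m * Arg (- \<beta>1 z) + of_int n * Arg (- \<beta>2 z))"
  have cisg: "\<beta>3 z = cis (g z)" if "z \<in> torus" for z
  proof -
    have e1: "\<beta>1 z = - cis (Arg (- \<beta>1 z))" using unit_cis[of "- \<beta>1 z"] bu(1)[OF that] by simp
    have e2: "\<beta>2 z = - cis (Arg (- \<beta>2 z))" using unit_cis[of "- \<beta>2 z"] bu(2)[OF that] by simp
    have "\<beta>3 z = (- cis (Arg (- \<beta>1 z))) powi m * (- cis (Arg (- \<beta>2 z))) powi n"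
      using b3f[OF that] e1 e2 by metis
    also have "\<dots> = cis (g z)" using om by (simp add: cis_power_int cis_mult g_def)
    finally show ?thesis .
  qed
  have Sm: "z \<in> torus \<and> \<beta>1 z \<noteq> 1 \<and> \<beta>2 z \<noteq> 1 \<and> \<beta>3 z \<noteq> 1" if "z \<in> S" for z
    using that anz unfolding S_def L1 L2 L3 \<beta>1_def \<beta>2_def \<beta>3_def by auto
  have gnz: "g z \<noteq> 0" if "z \<in> S" for z
  proof
    assume "g z = 0"
    hence "\<beta>3 z = 1" using cisg Sm[OF that] by simp
    thus False using Sm[OF that] by simp
  qed
  have cont: "continuous_on S g"
  proof -
    have St: "S \<subseteq> torus" unfolding S_def by blast
    have c1: "continuous_on S (\<lambda>z. - \<beta>1 z)" unfolding \<beta>1_def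
      by (intro continuous_intros continuous_on_subset[OF W_cont St]) (simp add: anz)
    have c2: "continuous_on S (\<lambda>z. - \<beta>2 z)" unfolding \<beta>2_def
      by (intro continuous_intros continuous_on_subset[OF W_cont St]) (simp add: anz)
    have "continuous_on S (\<lambda>z. Arg (- \<beta>1 z))"
      by (rule cont_Arg_comp[OF c1]) (use Sm bu ang_props(1) in blast)
    moreover have "continuous_on S (\<lambda>z. Arg (- \<beta>2 z))"
      by (rule cont_Arg_comp[OF c2]) (use Sm bu ang_props(1) in blast)
    ultimately show ?thesis unfolding g_def
      by (intro continuous_on_add continuous_on_mult[OF continuous_on_const])
  qed
  have pts: "\<exists>z\<in>S. g z = s * pi / 2" if s: "s = 1 \<or> s = -1" for s :: real
  proof -
    define r1 where "r1 = c1 + 1/2 + s * of_int m / 8"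
    define r2 where "r2 = c2 + 1/2 + s * of_int n / 8"
    have "a1*b2 - a2*b1 \<noteq> 0" using d(1) by auto
    from point_exists[OF this, of r1 r2] obtain z where z: "z \<in> torus"
      "W a1 b1 z = cis (2*pi*r1)" "W a2 b2 z = cis (2*pi*r2)" by blast
    have "\<beta>1 z = cis (pi + s * of_int m * pi / 4)"
      unfolding \<beta>1_def z(2) \<alpha>1_def cis_divide r1_def by (simp add: algebra_simps)
    hence B1: "\<beta>1 z = - cis (s * of_int m * pi / 4)" by (simp add: cis_mult[symmetric])
    have "\<beta>2 z = cis (pi + s * of_int n * pi / 4)"
      unfolding \<beta>2_def z(3) \<alpha>2_def cis_divide r2_def by (simp add: algebra_simps)
    hence B2: "\<beta>2 z = - cis (s * of_int n * pi / 4)" by (simp add: cis_mult[symmetric])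
    have sm: "s * of_int m * pi / 4 \<in> {-pi<..pi}" "s * of_int n * pi / 4 \<in> {-pi<..pi}"
      using s m1 n1 pi_gt_zero by auto
    have A1: "Arg (- \<beta>1 z) = s * of_int m * pi / 4" using B1 Arg_cis[OF sm(1)] by simp
    have A2: "Arg (- \<beta>2 z) = s * of_int n * pi / 4" using B2 Arg_cis[OF sm(2)] by simp
    have gz: "g z = s * pi / 2"
    proof -
      have "g z = s * pi / 4 * (of_int m * of_int m) + s * pi / 4 * (of_int n * of_int n)"
        unfolding g_def A1 A2 by (simp add: algebra_simps)
      also have "\<dots> = s * pi / 2" using mm by simp
      finally show ?thesis .
    qed
    have Am1: "Arg (- (1::complex)) = pi" by (simp add: Arg_eq_pi_iff)
    have n1': "\<beta>1 z \<noteq> 1"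
    proof
      assume "\<beta>1 z = 1"
      hence "s * of_int m * pi / 4 = pi" using A1 Am1 by simp
      thus False using s m1 pi_gt_zero by auto
    qed
    have n2': "\<beta>2 z \<noteq> 1"
    proof
      assume "\<beta>2 z = 1"
      hence "s * of_int n * pi / 4 = pi" using A2 Am1 by simp
      thus False using s n1 pi_gt_zero by auto
    qed
    have n3': "\<beta>3 z \<noteq> 1" using cisg[OF z(1)] gz s by (auto simp: complex_eq_iff)
    have "z \<in> S" unfolding S_def L1 L2 L3 using z(1) n1' n2' n3'
      unfolding \<beta>1_def \<beta>2_def \<beta>3_def using anz by auto
    thus ?thesis using gz by blast
  qed
  obtain zp zm where zp: "zp \<in> S" "g zp = pi/2" and zm: "zm \<in> S" "g zm = - pi/2"
    using pts[of 1] pts[of "-1"] by auto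
  have "connected (g ` S)" by (rule connected_continuous_image[OF cont conn])
  moreover have "g zm \<in> g ` S" using zm(1) by (rule imageI)
  moreover have "g zp \<in> g ` S" using zp(1) by (rule imageI)
  moreover have "g zm \<le> 0" using zm(2) pi_gt_zero by simp
  moreover have "0 \<le> g zp" unfolding zp(2) using pi_gt_zero by simp
  ultimately have "0 \<in> g ` S" unfolding connected_iff_interval by blast
  thus False using gnz by auto
qed



lemma line_sub: "toric_line a b c \<subseteq> torus"
  by (auto simp: toric_line_def torus_map_in)

lemma neq_lines:
  assumes "coprime a b" "coprime a' b'" "a*b' - a'*b \<noteq> 0"
  shows "toric_line a b c \<noteq> toric_line a' b' c'"
proof
  assume eq: "toric_line a b c = toric_line a' b' c'"
  from point_exists[OF assms(3), of c "c' + 1/2"] obtain z where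
    z: "z \<in> torus" "W a b z = cis (2*pi*c)" "W a' b' z = cis (2*pi*(c'+1/2))" by blast
  have "z \<in> toric_line a b c" using z line_char[OF assms(1)] by simp
  hence "z \<in> toric_line a' b' c'" using eq by simp
  hence "cis (2*pi*(c'+1/2)) = cis (2*pi*c')" using z line_char[OF assms(2)] by simp
  hence "(c' + 1/2) - c' \<in> \<int>" by (simp only: cis_2pi_eq)
  hence "(1/2::real) \<in> \<int>" by simp
  then obtain k :: int where k: "(1/2::real) = of_int k" by (rule Ints_cases)
  hence "real_of_int (2*k) = 1" by simp
  hence "2*k = 1" by (simp only: of_int_eq_1_iff)
  thus False by presburger
qed

lemma pair_info:
  assumes "coprime a b" "coprime a' b'" "a*b' - a'*b \<noteq> 0"
    and "toric_line a b c \<inter> toric_line a' b' c' \<subseteq> {v}"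
  shows "v \<in> toric_line a b c" "v \<in> toric_line a' b' c'" "\<bar>a*b' - a'*b\<bar> = 1"
proof -
  from point_exists[OF assms(3), of c c'] obtain z where
    z: "z \<in> torus" "W a b z = cis (2*pi*c)" "W a' b' z = cis (2*pi*c')" by blast
  have zi: "z \<in> toric_line a b c" "z \<in> toric_line a' b' c'"
    using z line_char[OF assms(1)] line_char[OF assms(2)] by auto
  hence "z = v" using assms(4) by blast
  thus "v \<in> toric_line a b c" "v \<in> toric_line a' b' c'" using zi by auto
  show "\<bar>a*b' - a'*b\<bar> = 1"
  proof (rule ccontr)
    assume "\<bar>a*b' - a'*b\<bar> \<noteq> 1"
    from two_points[OF assms(1) assms(3) this, of c c'] obtain y y' where
      y: "y \<in> torus" "y' \<in> torus" "y \<noteq> y'" "W a b y = cis (2*pi*c)" "W a' b' y = cis (2*pi*c')"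
       "W a b y' = cis (2*pi*c)" "W a' b' y' = cis (2*pi*c')" by blast
    have "y \<in> toric_line a b c \<inter> toric_line a' b' c'" "y' \<in> toric_line a b c \<inter> toric_line a' b' c'"
      using y line_char[OF assms(1)] line_char[OF assms(2)] by auto
    hence "y = v" "y' = v" using assms(4) by blast+
    thus False using y(3) by simp
  qed
qed

lemma par_eq:
  assumes "coprime a b" "coprime a' b'" "a*b' = a'*b"
    and "v \<in> toric_line a b c" "v \<in> toric_line a' b' c'"
  shows "toric_line a b c = toric_line a' b' c'"
proof -
  have L: "toric_line a b c = {z\<in>torus. W a b z = W a b v}"
    using line_char[OF assms(1)] assms(4) by auto
  have L': "toric_line a' b' c' = {z\<in>torus. W a' b' z = W a' b' v}"
    using line_char[OF assms(2)] assms(5) by auto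
  have vt: "v \<in> torus" using assms(4) line_sub by blast
  from pm_lemma[OF assms(1-3)] show ?thesis
  proof
    assume "a' = a \<and> b' = b" thus ?thesis using L L' by simp
  next
    assume h: "a' = -a \<and> b' = -b"
    have "{z\<in>torus. W a' b' z = W a' b' v} = {z\<in>torus. W a b z = W a b v}"
      using h W_neg vt by auto
    thus ?thesis using L L' by simp
  qed
qed

lemma no_one:
  assumes arr: "toric_arrangement A" and c3: "card A = 3"
    and cv: "card (arr_vertices A) = 1" and cc: "card (arr_chambers A) = 1"
  shows False
proof -
  obtain a1 b1 c1 a2 b2 c2 where cp1: "coprime a1 b1" and cp2: "coprime a2 b2"
    and L1A: "toric_line a1 b1 c1 \<in> A" and L2A: "toric_line a2 b2 c2 \<in> A"
    and d12: "a1 * b2 \<noteq> a2 * b1"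
    using arr unfolding toric_arrangement_def by blast
  define L1 where "L1 = toric_line a1 b1 c1"
  define L2 where "L2 = toric_line a2 b2 c2"
  have d12': "a1*b2 - a2*b1 \<noteq> 0" using d12 by simp
  have L12: "L1 \<noteq> L2" unfolding L1_def L2_def by (rule neq_lines[OF cp1 cp2 d12'])
  have fA: "finite A" using arr unfolding toric_arrangement_def by blast
  have "card (A - {L1, L2}) = 1"
    using c3 L1A L2A L12 fA unfolding L1_def L2_def by (simp add: card_Diff_subset)
  then obtain L3 where L3e: "A - {L1, L2} = {L3}" by (rule card_1_singletonE)
  hence Aeq: "A = {L1, L2, L3}" and L31: "L3 \<noteq> L1" and L32: "L3 \<noteq> L2"
    using L1A L2A unfolding L1_def L2_def by auto
  have "is_toric_line L3" using arr Aeq unfolding toric_arrangement_def by auto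
  then obtain a3 b3 c3 where cp3: "coprime a3 b3" and L3d: "L3 = toric_line a3 b3 c3"
    unfolding is_toric_line_def by blast
  from cv obtain v where V: "arr_vertices A = {v}" by (rule card_1_singletonE)
  have inter: "X \<inter> Y \<subseteq> {v}" if "X \<in> A" "Y \<in> A" "X \<noteq> Y" for X Y
  proof
    fix p assume p: "p \<in> X \<inter> Y"
    have "X \<subseteq> torus" using that(1) Aeq L1_def L2_def L3d line_sub by auto
    hence "p \<in> arr_vertices A" unfolding arr_vertices_def using p that by blast
    thus "p \<in> {v}" using V by simp
  qed
  have i12: "toric_line a1 b1 c1 \<inter> toric_line a2 b2 c2 \<subseteq> {v}"
    using inter[of L1 L2] Aeq L12 unfolding L1_def L2_def by auto
  have v1: "v \<in> L1" and v2: "v \<in> L2" and a12: "\<bar>a1*b2 - a2*b1\<bar> = 1"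
    using pair_info[OF cp1 cp2 d12' i12] unfolding L1_def L2_def by auto
  have i13: "toric_line a1 b1 c1 \<inter> toric_line a3 b3 c3 \<subseteq> {v}"
    using inter[of L1 L3] Aeq L31 L3d unfolding L1_def by auto
  have i23: "toric_line a2 b2 c2 \<inter> toric_line a3 b3 c3 \<subseteq> {v}"
    using inter[of L2 L3] Aeq L32 L3d unfolding L2_def by auto
  have not_both: "\<not> (a1*b3 - a3*b1 = 0 \<and> a2*b3 - a3*b2 = 0)"
  proof
    assume h: "a1*b3 - a3*b1 = 0 \<and> a2*b3 - a3*b2 = 0"
    have "a3 * (a1*b2 - a2*b1) = a1 * (a3*b2) - a2 * (a3*b1)" by (simp add: algebra_simps)
    also have "\<dots> = a1 * (a2*b3) - a2 * (a1*b3)" using h by simp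
    also have "\<dots> = 0" by (simp add: algebra_simps)
    finally have "a3 = 0" using d12' by simp
    have "b3 * (a1*b2 - a2*b1) = b2 * (a1*b3) - b1 * (a2*b3)" by (simp add: algebra_simps)
    also have "\<dots> = b2 * (a3*b1) - b1 * (a3*b2)" using h by simp
    also have "\<dots> = 0" by (simp add: algebra_simps)
    finally have "b3 = 0" using d12' by simp
    thus False using cp3 \<open>a3 = 0\<close> by simp
  qed
  show False
  proof (cases "a1*b3 - a3*b1 = 0")
    case True
    hence d23: "a2*b3 - a3*b2 \<noteq> 0" using not_both by simp
    have "v \<in> L3" using pair_info[OF cp2 cp3 d23 i23] L3d by simp
    have "L1 = L3" unfolding L1_def L3d
      by (rule par_eq[OF cp1 cp3 _ _ ]) (use True v1 \<open>v \<in> L3\<close> L1_def L3d in auto)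
    thus False using L31 by simp
  next
    case d13: False
    show False
    proof (cases "a2*b3 - a3*b2 = 0")
      case True
      have "v \<in> L3" using pair_info[OF cp1 cp3 d13 i13] L3d by simp
      have "L2 = L3" unfolding L2_def L3d
        by (rule par_eq[OF cp2 cp3 _ _ ]) (use True v2 \<open>v \<in> L3\<close> L2_def L3d in auto)
      thus False using L32 by simp
    next
      case d23: False
      have v3: "v \<in> L3" and a13: "\<bar>a1*b3 - a3*b1\<bar> = 1"
        using pair_info[OF cp1 cp3 d13 i13] L3d by auto
      have a23: "\<bar>a2*b3 - a3*b2\<bar> = 1" using pair_info[OF cp2 cp3 d23 i23] by auto
      have nc: "\<not> connected (torus - (L1 \<union> L2 \<union> L3))"
        unfolding L1_def L2_def L3d
        by (rule disconn[OF cp1 cp2 cp3 a12 a13 a23]) (use v1 v2 v3 L1_def L2_def L3d in auto)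
      from cc obtain C where "arr_chambers A = {C}" by (rule card_1_singletonE)
      hence "connected (torus - \<Union>A)" unfolding arr_chambers_def
        using components_eq_sing_exists by blast
      moreover have "\<Union>A = L1 \<union> L2 \<union> L3" using Aeq by auto
      ultimately show False using nc by simp
    qed
  qed
qed



lemma comp_char:
  assumes U: "\<Union>F = S" and cF: "\<And>C. C \<in> F \<Longrightarrow> connected C" and nF: "\<And>C. C \<in> F \<Longrightarrow> C \<noteq> {}"
    and dF: "\<And>C C'. C \<in> F \<Longrightarrow> C' \<in> F \<Longrightarrow> C \<noteq> C' \<Longrightarrow> C \<inter> C' = {}"
    and K: "\<And>K. connected K \<Longrightarrow> K \<subseteq> S \<Longrightarrow> K \<noteq> {} \<Longrightarrow> \<exists>C\<in>F. K \<subseteq> C"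
  shows "components S = F"
proof -
  have CS: "C \<subseteq> S" if "C \<in> F" for C using U that by blast
  have inF: "C = connected_component_set S x" if C: "C \<in> F" and x: "x \<in> C" for C x
  proof -
    have xS: "x \<in> S" using CS[OF C] x by blast
    have sub: "C \<subseteq> connected_component_set S x"
      by (rule connected_component_maximal[OF x cF[OF C] CS[OF C]])
    have "x \<in> connected_component_set S x" using connected_component_refl[OF xS] by simp
    then obtain C' where C': "C' \<in> F" "connected_component_set S x \<subseteq> C'"
      using K[of "connected_component_set S x"] connected_connected_component connected_component_subset
      by blast
    have "C = C'"
    proof (rule ccontr)
      assume "C \<noteq> C'"
      hence "C \<inter> C' = {}" using dF C C'(1) by blast
      thus False using sub C'(2) x by blast
    qed
    thus ?thesis using sub C'(2) by blast
  qed
  show ?thesis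
  proof
    show "components S \<subseteq> F"
    proof
      fix K assume "K \<in> components S"
      then obtain x where x: "x \<in> S" "K = connected_component_set S x" by (auto simp: components_iff)
      then obtain C where "C \<in> F" "x \<in> C" using U by blast
      thus "K \<in> F" using inF x by metis
    qed
    show "F \<subseteq> components S"
    proof
      fix C assume C: "C \<in> F"
      then obtain x where x: "x \<in> C" using nF by blast
      have "x \<in> S" using CS[OF C] x by blast
      thus "C \<in> components S" using inF[OF C x] by (simp add: componentsI)
    qed
  qed
qed

definition tt :: "complex \<Rightarrow> real" where "tt w = (Arg (-w) + pi) / (2*pi)"

lemma tt_props:
  assumes "cmod w = 1" "w \<noteq> 1"
  shows "0 < tt w" "tt w < 1" "cis (2*pi*tt w) = w"
proof -
  note a = ang_props[OF assms]
  show "0 < tt w" using a(2) pi_gt_zero unfolding tt_def by (simp add: field_simps)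
  show "tt w < 1" using a(3) pi_gt_zero unfolding tt_def by (simp add: field_simps)
  have "2*pi*tt w = Arg (-w) + pi" unfolding tt_def using pi_gt_zero by simp
  hence "cis (2*pi*tt w) = cis (Arg (-w) + pi)" by simp
  also have "\<dots> = cis (Arg (-w)) * cis pi" by (simp only: cis_mult)
  also have "\<dots> = w" using a(4) by simp
  finally show "cis (2*pi*tt w) = w" .
qed

lemma tt_cis:
  assumes "0 < x" "x < 1"
  shows "tt (cis (2*pi*x)) = x"
proof -
  have "- cis (2*pi*x) = cis (2*pi*x - pi)" by (simp add: cis_divide[symmetric])
  moreover have "2*pi*x - pi \<in> {-pi<..pi}" using assms pi_gt_zero by auto
  ultimately have "Arg (- cis (2*pi*x)) = 2*pi*x - pi" using Arg_cis by simp
  thus ?thesis unfolding tt_def using pi_gt_zero by simp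
qed

lemma tt_cont:
  assumes "\<And>z. z \<in> S \<Longrightarrow> cmod (f z) = 1 \<and> f z \<noteq> 1" "continuous_on S f"
  shows "continuous_on S (\<lambda>z. tt (f z))"
proof -
  have "continuous_on S (\<lambda>z. Arg (- f z))"
    by (rule cont_Arg_comp[OF continuous_on_minus[OF assms(2)]]) (use assms ang_props(1) in blast)
  thus ?thesis unfolding tt_def
    by (intro continuous_on_divide continuous_on_add continuous_on_const) auto
qed

lemma cis_ne1: "0 < x \<Longrightarrow> x < 1 \<Longrightarrow> cis (2*pi*x) \<noteq> 1"
proof
  assume "0 < x" "x < 1" "cis (2*pi*x) = 1"
  hence "cis (2*pi*x) = cis (2*pi*0)" by simp
  hence "x \<in> \<int>" by (simp only: cis_2pi_eq) simp
  then obtain m :: int where "x = of_int m" by (rule Ints_cases)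
  thus False using \<open>0 < x\<close> \<open>x < 1\<close> by simp
qed



lemma L1e: "toric_line 0 1 0 = {z\<in>torus. snd z = 1}"
  by (subst line_char) (auto simp: W_def)

lemma L2e: "toric_line 1 0 0 = {z\<in>torus. fst z = 1}"
  by (subst line_char) (auto simp: W_def)

lemma L3e: "toric_line 1 (int k) (1/2) = {z\<in>torus. fst z * snd z ^ k = -1}"
proof -
  have "cis (2*pi*(1/2)) = -1" by simp
  thus ?thesis by (subst line_char) (auto simp: W_def)
qed

lemma in_torus: "cmod a = 1 \<Longrightarrow> cmod b = 1 \<Longrightarrow> (a,b) \<in> torus"
  by (simp add: torus_eq)

lemma root_norm: "(\<zeta>::complex) ^ k = -1 \<Longrightarrow> cmod \<zeta> = 1"
proof -
  assume h: "\<zeta> ^ k = -1"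
  hence k: "k > 0" by (cases k) auto
  have "cmod \<zeta> ^ k = 1 ^ k" using h by (simp add: norm_power[symmetric])
  hence "cmod \<zeta> ^ k = 1 ^ k" .
  thus ?thesis using power_eq_imp_eq_base[of "cmod \<zeta>" k 1] k by simp
qed

definition Lk :: "nat \<Rightarrow> (complex \<times> complex) set set" where
  "Lk k = {toric_line 0 1 0, toric_line 1 0 0, toric_line 1 (int k) (1/2)}"

lemma Lk_props:
  "toric_line 0 1 0 \<noteq> toric_line 1 0 0" "toric_line 0 1 0 \<noteq> toric_line 1 (int k) (1/2)"
  "toric_line 1 0 0 \<noteq> toric_line 1 (int k) (1/2)"
proof -
  have p1: "(1,1) \<in> torus" "(-1,1) \<in> torus" by (simp_all add: in_torus)
  have a: "(-1,1) \<in> toric_line 0 1 0" "(-1,1) \<notin> toric_line 1 0 0" unfolding L1e L2e using p1 by simp_all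
  have b: "(1,1) \<in> toric_line 0 1 0" "(1,1) \<notin> toric_line 1 (int k) (1/2)" "(1,1) \<in> toric_line 1 0 0"
    unfolding L1e L2e L3e using p1 by simp_all
  show "toric_line 0 1 0 \<noteq> toric_line 1 0 0" using a by metis
  show "toric_line 0 1 0 \<noteq> toric_line 1 (int k) (1/2)" using b by metis
  show "toric_line 1 0 0 \<noteq> toric_line 1 (int k) (1/2)" using b by metis
qed

lemma Lk_card: "card (Lk k) = 3"
  unfolding Lk_def using Lk_props by simp

lemma Lk_arr: "toric_arrangement (Lk k)"
proof -
  have c: "coprime (0::int) 1" "coprime (1::int) 0" "coprime (1::int) (int k)" by simp_all
  have t: "is_toric_line (toric_line 0 1 0)" "is_toric_line (toric_line 1 0 0)"
    "is_toric_line (toric_line 1 (int k) (1/2))"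
    unfolding is_toric_line_def using c by blast+
  have "\<forall>L\<in>Lk k. is_toric_line L" unfolding Lk_def using t by blast
  moreover have "toric_line 0 1 0 \<in> Lk k" "toric_line 1 0 0 \<in> Lk k" unfolding Lk_def by simp_all
  moreover have "(0::int) * 0 \<noteq> 1 * 1" by simp
  moreover have "finite (Lk k)" unfolding Lk_def by simp
  ultimately show ?thesis unfolding toric_arrangement_def
    apply (intro conjI)
      apply assumption
     apply assumption
    apply (rule exI[of _ 0], rule exI[of _ 1], rule exI[of _ 0], rule exI[of _ 1], rule exI[of _ 0], rule exI[of _ 0])
    using c by simp
qed

lemma three_pairs:
  assumes "A \<noteq> B" "A \<noteq> C" "B \<noteq> C"
  shows "(\<exists>X\<in>{A,B,C}. \<exists>Y\<in>{A,B,C}. X \<noteq> Y \<and> p \<in> X \<and> p \<in> Y) \<longleftrightarrow>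
     (p \<in> A \<and> p \<in> B) \<or> (p \<in> A \<and> p \<in> C) \<or> (p \<in> B \<and> p \<in> C)"
  using assms by auto

lemma Lk_vert: "arr_vertices (Lk k) = {(1,1), (-1,1)} \<union> Pair 1 ` {\<zeta>. \<zeta> ^ k = -1}"
proof -
  have "arr_vertices (Lk k) = {p \<in> torus. (p \<in> toric_line 0 1 0 \<and> p \<in> toric_line 1 0 0) \<or>
     (p \<in> toric_line 0 1 0 \<and> p \<in> toric_line 1 (int k) (1/2)) \<or> (p \<in> toric_line 1 0 0 \<and> p \<in> toric_line 1 (int k) (1/2))}"
    unfolding arr_vertices_def Lk_def using three_pairs[OF Lk_props] by simp
  also have "\<dots> = {p \<in> torus. (snd p = 1 \<and> fst p = 1) \<or> (snd p = 1 \<and> fst p * snd p ^ k = -1)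
      \<or> (fst p = 1 \<and> fst p * snd p ^ k = -1)}"
    by (auto simp: L1e L2e L3e)
  also have "\<dots> = {(1,1), (-1,1)} \<union> Pair 1 ` {\<zeta>. \<zeta> ^ k = -1}"
  proof (rule set_eqI)
    fix p :: "complex \<times> complex"
    obtain a b where p: "p = (a,b)" by fastforce
    have t1: "(1,1) \<in> torus" "(-1,1) \<in> torus" by (simp_all add: in_torus)
    have t2: "(1,b) \<in> torus" if "b ^ k = -1" using root_norm[OF that] in_torus by simp
    show "p \<in> {p \<in> torus. (snd p = 1 \<and> fst p = 1) \<or> (snd p = 1 \<and> fst p * snd p ^ k = -1)
      \<or> (fst p = 1 \<and> fst p * snd p ^ k = -1)} \<longleftrightarrow> p \<in> {(1,1), (-1,1)} \<union> Pair 1 ` {\<zeta>. \<zeta> ^ k = -1}"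
      unfolding p using t1 t2 by auto
  qed
  finally show ?thesis .
qed

lemma Lk_vcard: "card (arr_vertices (Lk k)) = k + 2"
proof -
  have fin: "finite {\<zeta>::complex. \<zeta> ^ k = -1}"
  proof (cases "k = 0")
    case True thus ?thesis by simp
  next
    case False thus ?thesis by (intro finite_nth_roots) simp
  qed
  have cR: "card {\<zeta>::complex. \<zeta> ^ k = -1} = k"
  proof (cases "k = 0")
    case True thus ?thesis by simp
  next
    case False thus ?thesis by (intro card_nth_roots) auto
  qed
  have "card (Pair (1::complex) ` {\<zeta>::complex. \<zeta> ^ k = -1}) = k"
    using cR by (subst card_image) (auto simp: inj_on_def)
  moreover have "{(1::complex,1::complex), (-1,1)} \<inter> Pair 1 ` {\<zeta>. \<zeta> ^ k = -1} = {}" by auto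
  moreover have "card {(1::complex,1::complex), (-1,1)} = 2" by simp
  ultimately show ?thesis unfolding Lk_vert using fin
    by (subst card_Un_disjoint) auto
qed



definition Sk :: "nat \<Rightarrow> (complex \<times> complex) set" where "Sk k = torus - \<Union>(Lk k)"
definition Gk :: "nat \<Rightarrow> complex \<times> complex \<Rightarrow> real" where "Gk k z = tt (fst z) + real k * tt (snd z)"
definition Ck :: "nat \<Rightarrow> nat \<Rightarrow> (complex \<times> complex) set" where
  "Ck k j = {z \<in> Sk k. real j - 1/2 < Gk k z \<and> Gk k z < real j + 1/2}"
definition Rk :: "nat \<Rightarrow> nat \<Rightarrow> (real \<times> real) set" where
  "Rk k j = {p. 0 < fst p \<and> fst p < 1 \<and> 0 < snd p \<and> snd p < 1 \<and>
     real j - 1/2 < fst p + real k * snd p \<and> fst p + real k * snd p < real j + 1/2}"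

lemma cis_lin: "cis (2*pi*(x + real k * y)) = cis (2*pi*x) * cis (2*pi*y) ^ k"
proof -
  have "cis (2*pi*x) * cis (2*pi*y) ^ k = cis (2*pi*x + real k * (2*pi*y))" using Complex.DeMoivre[of "2*pi*y" k] cis_mult[of "2*pi*x" "real k * (2*pi*y)"] by simp
  moreover have "2*pi*x + real k * (2*pi*y) = 2*pi*(x + real k * y)" by (simp add: algebra_simps)
  ultimately show ?thesis by simp
qed

lemma Sk_eq: "Sk k = {z\<in>torus. fst z \<noteq> 1 \<and> snd z \<noteq> 1 \<and> fst z * snd z ^ k \<noteq> -1}"
  unfolding Sk_def Lk_def L1e L2e L3e by auto

lemma Sk_D: assumes "z \<in> Sk k"
  shows "z \<in> torus" "cmod (fst z) = 1" "cmod (snd z) = 1" "fst z \<noteq> 1" "snd z \<noteq> 1" "fst z * snd z ^ k \<noteq> -1"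
  using assms unfolding Sk_eq by (auto dest: torus_fst torus_snd)

lemma G_cis: assumes "z \<in> Sk k" shows "cis (2*pi*Gk k z) = fst z * snd z ^ k"
proof -
  note D = Sk_D[OF assms]
  have "cis (2*pi*Gk k z) = cis (2*pi*tt (fst z)) * cis (2*pi*tt (snd z)) ^ k"
    unfolding Gk_def by (rule cis_lin)
  also have "\<dots> = fst z * snd z ^ k" using tt_props(3)[OF D(2,4)] tt_props(3)[OF D(3,5)] by simp
  finally show ?thesis .
qed

lemma G_half: assumes "z \<in> Sk k" shows "Gk k z \<noteq> real_of_int m + 1/2"
proof
  assume h: "Gk k z = real_of_int m + 1/2"
  hence "Gk k z - 1/2 \<in> \<int>" by simp
  hence "cis (2*pi*Gk k z) = cis (2*pi*(1/2))" by (simp only: cis_2pi_eq)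
  hence "fst z * snd z ^ k = -1" using G_cis[OF assms] by simp
  thus False using Sk_D(6)[OF assms] by simp
qed

lemma G_range: assumes "z \<in> Sk k" shows "0 < Gk k z" "Gk k z < real k + 1"
proof -
  note D = Sk_D[OF assms]
  have a: "0 < tt (fst z)" "tt (fst z) < 1" using tt_props[OF D(2,4)] by auto
  have b: "0 < tt (snd z)" "tt (snd z) < 1" using tt_props[OF D(3,5)] by auto
  have "real k * tt (snd z) \<ge> 0" using b by simp
  thus "0 < Gk k z" unfolding Gk_def using a by simp
  have "real k * tt (snd z) \<le> real k" using b by (simp add: mult_left_le)
  thus "Gk k z < real k + 1" unfolding Gk_def using a by simp
qed

lemma G_cont: "continuous_on (Sk k) (Gk k)"
proof -
  have "continuous_on (Sk k) (\<lambda>z. tt (fst z))"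
    by (rule tt_cont) (auto dest: Sk_D intro: continuous_intros)
  moreover have "continuous_on (Sk k) (\<lambda>z. tt (snd z))"
    by (rule tt_cont) (auto dest: Sk_D intro: continuous_intros)
  ultimately show ?thesis unfolding Gk_def[abs_def]
    by (intro continuous_on_add continuous_on_mult[OF continuous_on_const])
qed

lemma tm_G:
  assumes "0 < fst p" "fst p < 1" "0 < snd p" "snd p < 1"
  shows "Gk k (torus_map p) = fst p + real k * snd p"
  using assms by (simp add: Gk_def torus_map_def tt_cis)

lemma Ck_eq: "Ck k j = torus_map ` Rk k j"
proof (intro equalityI subsetI)
  fix z assume z: "z \<in> Ck k j"
  hence zS: "z \<in> Sk k" unfolding Ck_def by simp
  note D = Sk_D[OF zS]
  define p where "p = (tt (fst z), tt (snd z))"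
  have "torus_map p = z" unfolding p_def torus_map_def
    using tt_props(3)[OF D(2,4)] tt_props(3)[OF D(3,5)] by simp
  moreover have "p \<in> Rk k j" unfolding Rk_def p_def
    using tt_props(1,2)[OF D(2,4)] tt_props(1,2)[OF D(3,5)] z unfolding Ck_def Gk_def by simp
  ultimately show "z \<in> torus_map ` Rk k j" by blast
next
  fix z assume "z \<in> torus_map ` Rk k j"
  then obtain p where p: "p \<in> Rk k j" and zp: "z = torus_map p" by blast
  hence b: "0 < fst p" "fst p < 1" "0 < snd p" "snd p < 1"
    and s: "real j - 1/2 < fst p + real k * snd p" "fst p + real k * snd p < real j + 1/2"
    unfolding Rk_def by auto
  have f1: "fst (torus_map p) \<noteq> 1" unfolding torus_map_def using cis_ne1 b by simp
  have f2: "snd (torus_map p) \<noteq> 1" unfolding torus_map_def using cis_ne1 b by simp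
  have f3: "fst (torus_map p) * snd (torus_map p) ^ k \<noteq> -1"
  proof
    assume "fst (torus_map p) * snd (torus_map p) ^ k = -1"
    hence "cis (2*pi*(fst p + real k * snd p)) = cis (2*pi*(1/2))"
      unfolding torus_map_def cis_lin by simp
    hence "fst p + real k * snd p - 1/2 \<in> \<int>" by (simp only: cis_2pi_eq)
    then obtain m :: int where m: "fst p + real k * snd p - 1/2 = of_int m" by (rule Ints_cases)
    hence "real j - 1 < of_int m" "of_int m < real j" using s by simp_all
    hence "int j - 1 < m" "m < int j" by linarith+
    thus False by simp
  qed
  have "torus_map p \<in> Sk k" unfolding Sk_eq using f1 f2 f3 torus_map_in by blast
  thus "z \<in> Ck k j" unfolding zp Ck_def using tm_G[OF b, of k] s by simp
qed

lemma hs_convex: "convex {p::real\<times>real. a * fst p + b * snd p < c}"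
proof -
  have "{p::real\<times>real. a * fst p + b * snd p < c} = {p. inner (a,b) p < c}"
    by (auto simp: inner_prod_def)
  thus ?thesis using convex_halfspace_lt by metis
qed

lemma Rk_convex: "convex (Rk k j)"
proof -
  have "Rk k j = {p. (-1) * fst p + 0 * snd p < 0} \<inter> {p. 1 * fst p + 0 * snd p < 1} \<inter>
     {p. 0 * fst p + (-1) * snd p < 0} \<inter> {p. 0 * fst p + 1 * snd p < 1} \<inter>
     {p. (-1) * fst p + (- real k) * snd p < - (real j - 1/2)} \<inter> {p. 1 * fst p + real k * snd p < real j + 1/2}"
    unfolding Rk_def by auto
  thus ?thesis by (simp only:) (intro convex_Int hs_convex)
qed

lemma tm_cont: "continuous_on UNIV torus_map"
  unfolding torus_map_def[abs_def] by (intro continuous_intros)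

lemma Ck_conn: "connected (Ck k j)"
  unfolding Ck_eq
  by (rule connected_continuous_image[OF continuous_on_subset[OF tm_cont] convex_connected[OF Rk_convex]]) simp



lemma Ck_ne: assumes "j \<le> k + 1" shows "Ck k j \<noteq> {}"
proof -
  have "\<exists>p. p \<in> Rk k j"
  proof (cases "j = 0")
    case True
    define y where "y = 1 / (8 * (real k + 1))"
    have y: "0 < y" "y < 1" unfolding y_def by (simp_all add: field_simps)
    have "real k * y < 1/4" unfolding y_def by (simp add: field_simps)
    moreover have "real k * y \<ge> 0" using y by simp
    moreover have "real j = 0" using True by simp
    ultimately have "(1/4, y) \<in> Rk k j" unfolding Rk_def mem_Collect_eq fst_conv snd_conv
      using y by (intro conjI; linarith)
    thus ?thesis by blast
  next
    case j0: False
    show ?thesis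
    proof (cases "j = k + 1")
      case True
      define y where "y = 1 - 1 / (8 * (real k + 1))"
      have y: "0 < y" "y < 1" unfolding y_def by (simp_all add: field_simps)
      have a: "real k * (1 / (8 * (real k + 1))) < 1/4" by (simp add: field_simps)
      have b: "real k * (1 / (8 * (real k + 1))) \<ge> 0" by simp
      have "real k * y = real k - real k * (1 / (8 * (real k + 1)))" unfolding y_def by (simp add: algebra_simps)
      moreover have "real j = real k + 1" using True by simp
      ultimately have "(3/4, y) \<in> Rk k j" unfolding Rk_def mem_Collect_eq fst_conv snd_conv
        using y a b by (intro conjI; linarith)
      thus ?thesis by blast
    next
      case False
      hence jk: "1 \<le> j" "j \<le> k" using j0 assms by auto
      hence kp: "real k > 0" by simp
      define y where "y = (real j - 1/2) / real k"
      have jr: "1 \<le> real j" "real j \<le> real k" using jk by simp_all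
      have y: "0 < y" "y < 1" unfolding y_def using kp jr by (simp_all add: field_simps)
      have "real k * y = real j - 1/2" unfolding y_def using kp by simp
      hence "(1/2, y) \<in> Rk k j" unfolding Rk_def mem_Collect_eq fst_conv snd_conv
        using y by (intro conjI; linarith)
      thus ?thesis by blast
    qed
  qed
  thus ?thesis unfolding Ck_eq by blast
qed

lemma Ck_union: assumes "z \<in> Sk k" shows "\<exists>j\<in>{0..k+1}. z \<in> Ck k j"
proof -
  define f where "f = \<lfloor>Gk k z + 1/2\<rfloor>"
  have f1: "of_int f \<le> Gk k z + 1/2" "Gk k z + 1/2 < of_int f + 1" unfolding f_def by linarith+
  have "Gk k z \<noteq> real_of_int (f - 1) + 1/2" by (rule G_half[OF assms])
  hence f2: "of_int f < Gk k z + 1/2" using f1 by simp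
  have r: "0 < Gk k z" "Gk k z < real k + 1" using G_range[OF assms] by auto
  have "0 \<le> f" using f1 r by linarith
  moreover have "f \<le> int k + 1" using f1 r by linarith
  ultimately have jr: "nat f \<in> {0..k+1}" "real (nat f) = of_int f" by auto
  have "z \<in> Ck k (nat f)" unfolding Ck_def using assms f1 f2 jr(2) by simp
  thus ?thesis using jr(1) by blast
qed

lemma Ck_disj: assumes "i \<noteq> j" shows "Ck k i \<inter> Ck k j = {}"
proof (rule ccontr)
  assume "Ck k i \<inter> Ck k j \<noteq> {}"
  then obtain z where z: "z \<in> Ck k i" "z \<in> Ck k j" by blast
  hence "real i < real j + 1" "real j < real i + 1" unfolding Ck_def by auto
  hence "i < j + 1" "j < i + 1" by linarith+
  thus False using assms by simp
qed

lemma Ck_K: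
  assumes K: "connected K" "K \<subseteq> Sk k" "K \<noteq> {}"
  shows "\<exists>j\<in>{0..k+1}. K \<subseteq> Ck k j"
proof -
  obtain z0 where z0: "z0 \<in> K" using K(3) by blast
  then obtain j where j: "j \<in> {0..k+1}" "z0 \<in> Ck k j" using Ck_union K(2) by blast
  have ci: "connected (Gk k ` K)"
    by (rule connected_continuous_image[OF continuous_on_subset[OF G_cont K(2)] K(1)])
  have g0: "real j - 1/2 < Gk k z0" "Gk k z0 < real j + 1/2" using j(2) unfolding Ck_def by auto
  have iv: "\<And>x y w. x \<in> Gk k ` K \<Longrightarrow> y \<in> Gk k ` K \<Longrightarrow> x \<le> w \<Longrightarrow> w \<le> y \<Longrightarrow> w \<in> Gk k ` K"
    using ci unfolding connected_iff_interval by blast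
  have "K \<subseteq> Ck k j"
  proof
    fix z assume z: "z \<in> K"
    have zS: "z \<in> Sk k" using z K(2) by blast
    have a: "Gk k z0 \<in> Gk k ` K" "Gk k z \<in> Gk k ` K" using z z0 by auto
    have up: "Gk k z < real j + 1/2"
    proof (rule ccontr)
      assume "\<not> Gk k z < real j + 1/2"
      hence "real j + 1/2 \<in> Gk k ` K" using iv[OF a(1) a(2)] g0 by simp
      then obtain z' where z': "z' \<in> K" "Gk k z' = real_of_int (int j) + 1/2" by auto
      have "z' \<in> Sk k" using z'(1) K(2) by blast
      thus False using G_half z'(2) by blast
    qed
    have lo: "real j - 1/2 < Gk k z"
    proof (rule ccontr)
      assume "\<not> real j - 1/2 < Gk k z"
      hence "real j - 1/2 \<in> Gk k ` K" using iv[OF a(2) a(1)] g0 by simp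
      then obtain z' where z': "z' \<in> K" "Gk k z' = real j - 1/2" by auto
      hence "Gk k z' = real_of_int (int j - 1) + 1/2" by simp
      moreover have "z' \<in> Sk k" using z'(1) K(2) by blast
      ultimately show False using G_half by blast
    qed
    show "z \<in> Ck k j" unfolding Ck_def using zS up lo by simp
  qed
  thus ?thesis using j(1) by blast
qed

lemma Lk_chambers: "card (arr_chambers (Lk k)) = k + 2"
proof -
  have "components (Sk k) = Ck k ` {0..k+1}"
  proof (rule comp_char)
    show "\<Union> (Ck k ` {0..k+1}) = Sk k"
    proof (rule equalityI)
      show "\<Union> (Ck k ` {0..k+1}) \<subseteq> Sk k" unfolding Ck_def by (rule UN_least) blast
      show "Sk k \<subseteq> \<Union> (Ck k ` {0..k+1})"
      proof
        fix z assume "z \<in> Sk k"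
        then obtain j where "j \<in> {0..k+1}" "z \<in> Ck k j" using Ck_union by blast
        thus "z \<in> \<Union> (Ck k ` {0..k+1})" by (rule UN_I)
      qed
    qed
  next
    fix C assume "C \<in> Ck k ` {0..k+1}"
    then obtain j where j: "j \<in> {0..k+1}" "C = Ck k j" by (rule imageE) 
    show "connected C" unfolding j(2) by (rule Ck_conn)
    show "C \<noteq> {}" unfolding j(2) using j(1) by (intro Ck_ne) simp
  next
    fix C C' assume h: "C \<in> Ck k ` {0..k+1}" "C' \<in> Ck k ` {0..k+1}" "C \<noteq> C'"
    obtain i where i: "C = Ck k i" using h(1) by (rule imageE) 
    obtain j where j: "C' = Ck k j" using h(2) by (rule imageE)
    have "i \<noteq> j" using h(3) i j by metis
    thus "C \<inter> C' = {}" unfolding i j by (rule Ck_disj)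
  next
    fix K assume K: "connected K" "K \<subseteq> Sk k" "K \<noteq> {}"
    obtain j where j: "j \<in> {0..k+1}" "K \<subseteq> Ck k j" using Ck_K[OF K] by blast
    have "Ck k j \<in> Ck k ` {0..k+1}" using j(1) by (rule imageI)
    thus "\<exists>C\<in>Ck k ` {0..k+1}. K \<subseteq> C" using j(2) by (rule bexI[rotated])
  qed
  moreover have "inj_on (Ck k) {0..k+1}"
  proof (rule inj_onI)
    fix i j assume ij: "i \<in> {0..k+1}" "j \<in> {0..k+1}" "Ck k i = Ck k j"
    show "i = j"
    proof (rule ccontr)
      assume "i \<noteq> j"
      hence "Ck k i \<inter> Ck k j = {}" by (rule Ck_disj)
      hence "Ck k i = {}" using ij(3) by simp
      moreover have "Ck k i \<noteq> {}" using ij(1) by (intro Ck_ne) simp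
      ultimately show False by contradiction
    qed
  qed
  hence "card (Ck k ` {0..k+1}) = card {0..k+1}" by (rule card_image)
  ultimately have "card (components (Sk k)) = k + 2" by simp
  thus ?thesis unfolding arr_chambers_def Sk_def .
qed

theorem mainTheorem7:
  fixes f0 :: nat
  assumes "f0 > 0"
  shows "(\<exists>A. toric_arrangement A \<and> card A = 3 \<and> card (arr_vertices A) = f0 \<and>
             card (arr_chambers A) = f0) \<longleftrightarrow> f0 \<ge> 2"
proof
  assume "\<exists>A. toric_arrangement A \<and> card A = 3 \<and> card (arr_vertices A) = f0 \<and> card (arr_chambers A) = f0"
  then obtain A where A: "toric_arrangement A" "card A = 3" "card (arr_vertices A) = f0" "card (arr_chambers A) = f0"
    by blast
  show "f0 \<ge> 2"
  proof (rule ccontr)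
    assume "\<not> f0 \<ge> 2"
    hence "f0 = 1" using assms by simp
    thus False using no_one[OF A(1,2)] A(3,4) by simp
  qed
next
  assume "f0 \<ge> 2"
  then obtain k where k: "f0 = k + 2" by (metis add.commute le_add_diff_inverse)
  show "\<exists>A. toric_arrangement A \<and> card A = 3 \<and> card (arr_vertices A) = f0 \<and> card (arr_chambers A) = f0"
    by (rule exI[of _ "Lk k"]) (simp add: Lk_arr Lk_card Lk_vcard Lk_chambers k)
qed

end
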